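(* Let $f(\mathbf z,\bar{\mathbf z})$ be a convenient mixed function of $n$ variables. (1) If $f$ is of polar positive weighted homogeneous face type, then for every weight vector $P$, the face function $f_P$ is a polar weighted homogeneous polynomial. (2) If $f$ is of strongly polar positive weighted homogeneous face type, then for every weight vector $P$, the face function $f_P$ is a strongly polar positive weighted homogeneous polynomial (with respect to the weight $P$).
   Context: A mixed function is a convergent series $f(\mathbf z,\bar{\mathbf z})=\sum_{\nu,\mu}c_{\nu,\mu}\mathbf z^\nu\bar{\mathbf z}^\mu$, $\nu,\mu\in\mathbb Z_{\ge0}^n$. Its Newton polyhedron $\Gamma_+(f)$ is the convex hull of $\bigcup_{c_{\nu,\mu}\ne0}\big((\nu+\mu)+\mathbb R_{\ge0}^n\big)$, and $\Gamma(f)$ is the union of its compact faces. $f$ is convenient if $\Gamma(f)$ meets every coordinate axis. A weight vector is $P=(p_1,\dots,p_n)$ with positive integers $p_j$; $d(P;f)=\min\{\sum_j p_j\xi_j:\xi\in\Gamma_+(f)\}$, $\Delta(P)=\{\xi\in\Gamma_+(f):\sum_jp_j\xi_j=d(P;f)\}$, and the face function is $f_P=\sum_{\nu+\mu\in\Delta(P)}c_{\nu,\mu}\mathbf z^\nu\bar{\mathbf z}^\mu$. A mixed polynomial $h$ is polar weighted homogeneous if there exist positive integer vectors $Q$ (radial weight) and $P'$ (polar weight) and non-zero integers $m_r,m_p$ with $\sum_j q_j(\nu_j+\mu_j)=m_r$, $\sum_jp'_j(\nu_j-\mu_j)=m_p$ for all monomials of $h$; $m_p$ is its polar degree. It is strongly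 polar positive weighted homogeneous (with weight $P$) if this holds with $Q=P'=P$ and $m_p>0$. $f$ is of polar positive weighted homogeneous face type if for every $P$ with $\dim\Delta(P)=n-1$, $f_P$ is polar weighted homogeneous for some polar weight $P'$ with positive polar degree; it is of strongly polar positive weighted homogeneous face type if for every $P$ with $\dim\Delta(P)=n-1$, $f_P$ is strongly polar positive weighted homogeneous with weight $P$ itself. *)

theory Defs
  imports "HOL-Analysis.Analysis"
begin

text \<open>A mixed function of n variables (n = CARD('n)) is given by its coefficient family
  c nu mu (coefficient of z^nu zbar^mu), exponents being multi-indices 'n => nat.\<close>

type_synonym 'n mexp = "'n \<Rightarrow> nat"
type_synonym 'n mixed = "'n mexp \<Rightarrow> 'n mexp \<Rightarrow> complex"

definition mixed_convergent :: "('n::finite) mixed \<Rightarrow> bool" where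
  "mixed_convergent c \<longleftrightarrow> (\<exists>r::real. r > 0 \<and>
     (\<lambda>(nu, mu). norm (c nu mu) * r ^ (sum nu UNIV + sum mu UNIV)) summable_on UNIV)"

definition mixed_support :: "('n::finite) mixed \<Rightarrow> ('n mexp \<times> 'n mexp) set" where
  "mixed_support c = {(nu, mu). c nu mu \<noteq> 0}"

definition exp_point :: "('n::finite) mexp \<Rightarrow> 'n mexp \<Rightarrow> real^'n" where
  "exp_point nu mu = (\<chi> j. real (nu j + mu j))"

definition newton_polyhedron :: "('n::finite) mixed \<Rightarrow> (real^'n) set" where
  "newton_polyhedron c = convex hull
     (\<Union>(nu, mu)\<in>mixed_support c. {x. \<forall>j. exp_point nu mu $ j \<le> x $ j})"

definition newton_boundary :: "('n::finite) mixed \<Rightarrow> (real^'n) set" where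
  "newton_boundary c = \<Union>{F. F face_of newton_polyhedron c \<and> compact F \<and> F \<noteq> {}}"

definition convenient :: "('n::finite) mixed \<Rightarrow> bool" where
  "convenient c \<longleftrightarrow>
     (\<forall>j. newton_boundary c \<inter> {x. \<forall>i. i \<noteq> j \<longrightarrow> x $ i = 0} \<noteq> {})"

definition weight_vector :: "('n::finite \<Rightarrow> nat) \<Rightarrow> bool" where
  "weight_vector P \<longleftrightarrow> (\<forall>j. P j > 0)"

definition wdot :: "('n::finite \<Rightarrow> nat) \<Rightarrow> real^'n \<Rightarrow> real" where
  "wdot P x = (\<Sum>j\<in>UNIV. real (P j) * x $ j)"

definition dP :: "('n::finite \<Rightarrow> nat) \<Rightarrow> 'n mixed \<Rightarrow> real" where
  "dP P c = Inf (wdot P ` newton_polyhedron c)"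

definition DeltaP :: "('n::finite \<Rightarrow> nat) \<Rightarrow> 'n mixed \<Rightarrow> (real^'n) set" where
  "DeltaP P c = {x \<in> newton_polyhedron c. wdot P x = dP P c}"

definition face_function :: "('n::finite \<Rightarrow> nat) \<Rightarrow> 'n mixed \<Rightarrow> 'n mixed" where
  "face_function P c = (\<lambda>nu mu. if exp_point nu mu \<in> DeltaP P c then c nu mu else 0)"

definition mixed_polynomial :: "('n::finite) mixed \<Rightarrow> bool" where
  "mixed_polynomial h \<longleftrightarrow> finite (mixed_support h)"

definition polar_wh_with :: "('n::finite) mixed \<Rightarrow> ('n \<Rightarrow> nat) \<Rightarrow> ('n \<Rightarrow> nat) \<Rightarrow> int \<Rightarrow> int \<Rightarrow> bool" where
  "polar_wh_with h Q P' mr mp \<longleftrightarrow> mixed_polynomial h \<and> weight_vector Q \<and> weight_vector P'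
     \<and> mr \<noteq> 0 \<and> mp \<noteq> 0
     \<and> (\<forall>(nu, mu)\<in>mixed_support h.
          (\<Sum>j\<in>UNIV. int (Q j) * int (nu j + mu j)) = mr
        \<and> (\<Sum>j\<in>UNIV. int (P' j) * (int (nu j) - int (mu j))) = mp)"

definition polar_weighted_homogeneous :: "('n::finite) mixed \<Rightarrow> bool" where
  "polar_weighted_homogeneous h \<longleftrightarrow> (\<exists>Q P' mr mp. polar_wh_with h Q P' mr mp)"

definition strongly_polar_positive_wh :: "('n::finite) mixed \<Rightarrow> ('n \<Rightarrow> nat) \<Rightarrow> bool" where
  "strongly_polar_positive_wh h P \<longleftrightarrow> (\<exists>mr mp. mp > 0 \<and> polar_wh_with h P P mr mp)"

definition polar_positive_wh_face_type :: "('n::finite) mixed \<Rightarrow> bool" where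
  "polar_positive_wh_face_type c \<longleftrightarrow>
     (\<forall>P. weight_vector P \<and> aff_dim (DeltaP P c) = int CARD('n) - 1 \<longrightarrow>
        (\<exists>Q P' mr mp. mp > 0 \<and> polar_wh_with (face_function P c) Q P' mr mp))"

definition strongly_polar_positive_wh_face_type :: "('n::finite) mixed \<Rightarrow> bool" where
  "strongly_polar_positive_wh_face_type c \<longleftrightarrow>
     (\<forall>P. weight_vector P \<and> aff_dim (DeltaP P c) = int CARD('n) - 1 \<longrightarrow>
        strongly_polar_positive_wh (face_function P c) P)"

end

theory Submission
  imports Defs
begin



lemma cofactor_normal:
  fixes B :: "(real^'n::finite) set"
  assumes intB: "\<forall>b\<in>B. \<forall>j. b$j \<in> \<int>"
    and dimB: "dim B = CARD('n) - 1"
  shows "\<exists>N::real^'n. N \<noteq> 0 \<and> (\<forall>j. N$j \<in> \<int>) \<and> (\<forall>b\<in>B. N \<bullet> b = 0)"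
proof -
  obtain B' where B': "B' \<subseteq> B" "independent B'" "B \<subseteq> span B'" "card B' = dim B"
    using basis_exists[of B] by blast
  have finB': "finite B'" using B'(2) finiteI_independent by blast
  obtain k :: 'n where True by simp
  have "card (UNIV - {k}) = card B'" using B'(4) dimB by (simp add: card_Diff_singleton)
  then obtain g where g: "bij_betw g (UNIV - {k}) B'"
    using finite_same_card_bij[of "UNIV - {k}" B'] finB' by auto
  define M :: "real^'n \<Rightarrow> real^'n^'n" where "M x = (\<chi> i. if i = k then x else g i)" for x
  define N :: "real^'n" where "N = (\<chi> j. det (M (axis j 1)))"
  have lin: "det (M x) = N \<bullet> x" for x
  proof -
    have "det (M x) = det (\<chi> i. if i = k then (\<Sum>j\<in>UNIV. (x$j) *s axis j 1) else g i)"
      unfolding M_def basis_expansion ..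
    also have "\<dots> = (\<Sum>j\<in>UNIV. det (\<chi> i. if i = k then (x$j) *s axis j (1::real) else g i))"
      by (rule det_linear_row_sum) simp
    also have "\<dots> = (\<Sum>j\<in>UNIV. x$j * det (\<chi> i. if i = k then axis j (1::real) else g i))"
      by (simp add: det_row_mul)
    also have "\<dots> = N \<bullet> x" unfolding N_def M_def inner_vec_def by (simp add: mult.commute)
    finally show ?thesis .
  qed
  have zB': "N \<bullet> b = 0" if bB: "b \<in> B'" for b
  proof -
    obtain i where i: "i \<in> UNIV - {k}" "g i = b" using g bB unfolding bij_betw_def by blast
    have "det (M b) = 0"
      by (rule det_identical_rows[of k i]) (use i in \<open>auto simp: M_def row_def\<close>)
    thus ?thesis using lin by simp
  qed
  have zB: "N \<bullet> b = 0" if "b \<in> B" for b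
  proof -
    have "b \<in> span B'" using B'(3) that by blast
    hence "orthogonal N b" by (rule orthogonal_to_span) (use zB' in \<open>auto simp: orthogonal_def\<close>)
    thus ?thesis by (simp add: orthogonal_def)
  qed
  have "dim B' = CARD('n) - 1" using B' dimB dim_eq_card_independent by metis
  hence "span B' \<noteq> UNIV" using dim_eq_full[of B'] by (metis DIM_cart DIM_real One_nat_def Suc_pred diff_less n_not_Suc_n nat_mult_1_right zero_less_card_finite zero_less_one)
  then obtain x where x: "x \<notin> span B'" by blast
  have rows: "rows (M x) = insert x B'"
    using g unfolding rows_def M_def row_def bij_betw_def by (auto simp: vec_eq_iff) 
  have "dim (rows (M x)) = CARD('n)"
    using rows x dim_insert[of x B'] \<open>dim B' = CARD('n) - 1\<close> by simp
  hence "det (M x) \<noteq> 0" by (simp add: det_eq_0_rank row_rank_def)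
  hence "N \<noteq> 0" using lin by auto
  moreover have "N$j \<in> \<int>" for j
  proof -
    have ent: "(M (axis j 1))$i$l \<in> \<int>" for i l
    proof (cases "i = k")
      case True thus ?thesis by (simp add: M_def axis_def)
    next
      case False
      hence "g i \<in> B" using g B'(1) unfolding bij_betw_def by auto
      thus ?thesis using intB False by (simp add: M_def)
    qed
    show ?thesis unfolding N_def det_def
      by (simp, intro Ints_sum Ints_mult Ints_prod ent, auto)
  qed
  ultimately show ?thesis using zB by blast
qed




lemma bounded_nat_funs_finite: "finite {f :: 'n::finite \<Rightarrow> nat. \<forall>j. f j \<le> N}"
proof -
  have "{f :: 'n \<Rightarrow> nat. \<forall>j. f j \<le> N} = Pi\<^sub>E UNIV (\<lambda>_. {..N})"
    by (auto simp: PiE_UNIV_domain Pi_def)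
  thus ?thesis by (simp add: finite_PiE)
qed

locale walk =
  fixes E :: "(real^'n::finite) set" and T :: "(real^'n) set" and t0 :: "real^'n"
  assumes natE: "\<forall>s\<in>E. \<forall>j. \<exists>k::nat. s$j = real k"
    and TE: "T \<subseteq> E" and t0T: "t0 \<in> T"
begin

definition ok :: "real^'n \<Rightarrow> bool" where
  "ok w \<longleftrightarrow> (\<forall>j. 0 \<le> w$j) \<and> (\<forall>s\<in>E. \<forall>t\<in>T. w \<bullet> t \<le> w \<bullet> s)"
definition pos :: "real^'n \<Rightarrow> bool" where "pos w \<longleftrightarrow> (\<forall>j. 0 < w$j)"
definition tight :: "real^'n \<Rightarrow> (real^'n) set" where "tight w = {s\<in>E. w \<bullet> s = w \<bullet> t0}"
definition D :: "real^'n \<Rightarrow> (real^'n) set" where "D w = (\<lambda>s. s - t0) ` tight w"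

lemma t0E: "t0 \<in> E" using TE t0T by auto

lemma nonnegE: "s \<in> E \<Longrightarrow> 0 \<le> s$j"
  using natE by (metis of_nat_0_le_iff)

lemma finite_below:
  assumes "pos w" shows "finite {s\<in>E. w \<bullet> s \<le> C}"
proof -
  define m where "m = Min (range (\<lambda>j. w$j))"
  have m: "0 < m" "\<And>j. m \<le> w$j" using assms unfolding m_def pos_def by auto
  define N where "N = nat \<lceil>C / m\<rceil>"
  have "{s\<in>E. w \<bullet> s \<le> C} \<subseteq> (\<lambda>f. \<chi> j. real (f j)) ` {f. \<forall>j. f j \<le> N}"
  proof
    fix s assume s: "s \<in> {s\<in>E. w \<bullet> s \<le> C}"
    have "\<forall>j. \<exists>k::nat. s$j = real k" using natE s by blast
    then obtain f where f: "\<And>j. s$j = real (f j)" using choice by metis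
    have "f j \<le> N" for j
    proof -
      have "w$j * s$j \<le> w \<bullet> s" unfolding inner_vec_def inner_real_def
        by (rule member_le_sum) (use assms s nonnegE[of s] in \<open>auto simp: pos_def intro: mult_nonneg_nonneg less_imp_le\<close>)
      hence "m * s$j \<le> C" using m(2)[of j] s nonnegE[of s j]
        by (smt (verit) mem_Collect_eq mult_right_mono)
      hence "s$j \<le> C / m" using m(1) by (simp add: field_simps)
      thus ?thesis unfolding N_def using f[of j] by linarith
    qed
    moreover have "s = (\<chi> j. real (f j))" using f by (simp add: vec_eq_iff)
    ultimately show "s \<in> (\<lambda>f. \<chi> j. real (f j)) ` {f. \<forall>j. f j \<le> N}" by blast
  qed
  thus ?thesis using finite_subset bounded_nat_funs_finite by blast
qed

lemma ok_T_tight: "ok w \<Longrightarrow> T \<subseteq> tight w"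
  unfolding ok_def tight_def using TE t0T t0E by (auto, smt (verit) subsetD)

lemma abs_bound:
  assumes "\<And>j. d * \<bar>u$j\<bar> \<le> th * w$j" "\<And>j. 0 \<le> s$j" "0 \<le> d"
  shows "\<bar>d * (u \<bullet> s)\<bar> \<le> th * (w \<bullet> s)"
proof -
  have "\<bar>d * (u \<bullet> s)\<bar> = \<bar>\<Sum>j\<in>UNIV. d * u$j * s$j\<bar>"
    by (simp add: inner_vec_def inner_real_def sum_distrib_left mult.assoc)
  also have "\<dots> \<le> (\<Sum>j\<in>UNIV. \<bar>d * u$j * s$j\<bar>)" by (rule sum_abs)
  also have "\<dots> \<le> (\<Sum>j\<in>UNIV. th * w$j * s$j)"
  proof (rule sum_mono)
    fix j
    have "\<bar>d * u$j * s$j\<bar> = d * \<bar>u$j\<bar> * s$j" using assms(2,3) by (simp add: abs_mult)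
    also have "\<dots> \<le> th * w$j * s$j" using assms(1)[of j] assms(2)[of j] by (simp add: mult_right_mono)
    finally show "\<bar>d * u$j * s$j\<bar> \<le> th * w$j * s$j" .
  qed
  also have "\<dots> = th * (w \<bullet> s)" by (simp add: inner_vec_def inner_real_def sum_distrib_left mult.assoc)
  finally show ?thesis .
qed

end



context walk begin

lemma inner_nonneg_E: "(\<forall>j. 0 \<le> w$j) \<Longrightarrow> s \<in> E \<Longrightarrow> 0 \<le> w \<bullet> s"
  unfolding inner_vec_def inner_real_def using nonnegE by (auto intro!: sum_nonneg)

lemma small_step:
  assumes p: "pos w" and o: "ok w" and u: "\<forall>s\<in>tight w. u \<bullet> (s - t0) = 0"
  shows "\<exists>d>0. ok (w + d *\<^sub>R u)"
proof -
  have wnn: "\<forall>j. 0 \<le> w$j" using p unfolding pos_def by (simp add: less_imp_le)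
  define C where "C = w \<bullet> t0"
  have C0: "0 \<le> C" unfolding C_def using inner_nonneg_E[OF wnn t0E] .
  define th :: real where "th = 1 / (2*C+2)"
  have th: "0 < th" "th \<le> 1/2" "th * (2*C+1) < 1" using C0 unfolding th_def by (auto simp: field_simps)
  define F where "F = {s\<in>E. w \<bullet> s \<le> C+1} - tight w"
  have finF: "finite F" unfolding F_def using finite_below[OF p] by blast
  have Fpos: "0 < w \<bullet> (s - t0)" if "s \<in> F" for s
  proof -
    have "w \<bullet> t0 \<le> w \<bullet> s" using o that t0T unfolding ok_def F_def by auto
    moreover have "w \<bullet> s \<noteq> w \<bullet> t0" using that unfolding F_def tight_def by auto
    ultimately show ?thesis by (simp add: inner_diff_right)
  qed
  define d1 where "d1 = Min (range (\<lambda>j. th * w$j / (\<bar>u$j\<bar>+1)))"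
  define d2 where "d2 = Min (insert 1 ((\<lambda>s. w \<bullet> (s - t0) / (\<bar>u \<bullet> (s - t0)\<bar>+1)) ` F))"
  define d where "d = min d1 d2"
  have d1pos: "0 < d1" unfolding d1_def using p th(1)
    by (subst Min_gr_iff) (auto simp: pos_def intro!: divide_pos_pos add_nonneg_pos)
  have d2pos: "0 < d2" unfolding d2_def using Fpos finF
    by (subst Min_gr_iff) (auto intro!: divide_pos_pos add_nonneg_pos)
  have dpos: "0 < d" unfolding d_def using d1pos d2pos by simp
  have dj: "d * \<bar>u$j\<bar> \<le> th * w$j" for j
  proof -
    have "d \<le> th * w$j / (\<bar>u$j\<bar>+1)" unfolding d_def d1_def
      by (rule min.coboundedI1, rule Min_le) auto
    hence "d * (\<bar>u$j\<bar>+1) \<le> th * w$j" by (simp add: field_simps)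
    thus ?thesis using dpos by (simp add: algebra_simps)
  qed
  have dF: "d * \<bar>u \<bullet> (s - t0)\<bar> \<le> w \<bullet> (s - t0)" if "s \<in> F" for s
  proof -
    have "d \<le> w \<bullet> (s - t0) / (\<bar>u \<bullet> (s - t0)\<bar>+1)" unfolding d_def d2_def
      by (rule min.coboundedI2, rule Min_le) (use finF that in auto)
    hence "d * (\<bar>u \<bullet> (s - t0)\<bar>+1) \<le> w \<bullet> (s - t0)" by (simp add: field_simps)
    thus ?thesis using dpos by (simp add: algebra_simps)
  qed
  have "ok (w + d *\<^sub>R u)"
    unfolding ok_def
  proof (intro conjI ballI allI)
    fix j
    have "\<bar>d * u$j\<bar> \<le> th * w$j" using dj[of j] dpos by (simp add: abs_mult)
    moreover have "th * w$j \<le> w$j" using th wnn[rule_format, of j] by (intro mult_left_le_one_le) auto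
    ultimately show "0 \<le> (w + d *\<^sub>R u) $ j" by simp
  next
    fix s t assume s: "s \<in> E" and t: "t \<in> T"
    have tt: "t \<in> tight w" using ok_T_tight[OF o] t by blast
    have wt: "w \<bullet> t = C" and ut: "u \<bullet> t = u \<bullet> t0" using tt u unfolding tight_def C_def
      by (auto simp: inner_diff_right)
    have key: "0 \<le> w \<bullet> (s - t0) + d * (u \<bullet> (s - t0))"
    proof (cases "s \<in> tight w")
      case True thus ?thesis using u unfolding tight_def by (simp add: inner_diff_right)
    next
      case nt: False
      show ?thesis
      proof (cases "w \<bullet> s \<le> C + 1")
        case True
        hence "s \<in> F" using s nt unfolding F_def by auto
        from dF[OF this] dpos have "\<bar>d * (u \<bullet> (s - t0))\<bar> \<le> w \<bullet> (s - t0)" by (simp add: abs_mult)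
        thus ?thesis by (simp add: abs_le_iff)
      next
        case False
        have b1: "\<bar>d * (u \<bullet> s)\<bar> \<le> th * (w \<bullet> s)"
          by (rule abs_bound) (use dj nonnegE[OF s] dpos in auto)
        have b2: "\<bar>d * (u \<bullet> t0)\<bar> \<le> th * C"
          unfolding C_def by (rule abs_bound) (use dj nonnegE[OF t0E] dpos in auto)
        have b3: "(1-th)*(C+1) \<le> (1-th)*(w \<bullet> s)" using False th by (intro mult_left_mono) auto
        have "th * (2*C+1) < 1" using th by simp
        moreover have "w \<bullet> t0 = C" by (simp add: C_def)
        ultimately show ?thesis using b1 b2 b3 by (simp add: inner_diff_right algebra_simps abs_le_iff)
      qed
    qed
    show "(w + d *\<^sub>R u) \<bullet> t \<le> (w + d *\<^sub>R u) \<bullet> s"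
      using key wt ut unfolding C_def by (simp add: inner_add_left inner_diff_right algebra_simps)
  qed
  thus ?thesis using dpos by blast
qed

end



context walk begin

lemma orth_span_D:
  assumes "\<forall>s\<in>tight w. u \<bullet> (s - t0) = 0" "x \<in> span (D w)"
  shows "u \<bullet> x = 0"
proof -
  have "orthogonal u x"
    by (rule orthogonal_to_span[OF assms(2)]) (use assms(1) in \<open>auto simp: D_def orthogonal_def\<close>)
  thus ?thesis by (simp add: orthogonal_def)
qed

lemma endpoint:
  assumes p: "pos w" and o: "ok w" and u: "\<forall>s\<in>tight w. u \<bullet> (s - t0) = 0" and k: "u$k < 0"
  shows "\<exists>t>0. ok (w + t *\<^sub>R u) \<and> ((\<exists>j. (w + t *\<^sub>R u)$j = 0) \<or>
            (pos (w + t *\<^sub>R u) \<and> dim (D w) < dim (D (w + t *\<^sub>R u))))"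
proof -
  define I where "I = {t::real. 0 \<le> t \<and> ok (w + t *\<^sub>R u)}"
  have Ieq: "I = {t. 0 \<le> t} \<inter> (\<Inter>j. {t. 0 \<le> w$j + t * u$j}) \<inter>
      (\<Inter>s\<in>E. \<Inter>t'\<in>T. {t. w \<bullet> t' + t * (u \<bullet> t') \<le> w \<bullet> s + t * (u \<bullet> s)})"
    unfolding I_def ok_def by (auto simp: inner_add_left)
  have clI: "closed I" unfolding Ieq
    by (intro closed_Int closed_INT closed_Collect_le continuous_intros ballI)
  have bdd: "bdd_above I"
  proof (rule bdd_aboveI)
    fix t assume "t \<in> I"
    hence "0 \<le> w$k + t * u$k" unfolding I_def ok_def by auto
    thus "t \<le> w$k / (- u$k)" using k by (simp add: field_simps)
  qed
  obtain d where d: "d > 0" "ok (w + d *\<^sub>R u)" using small_step[OF p o u] by blast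
  have dI: "d \<in> I" unfolding I_def using d by auto
  define t2 where "t2 = Sup I"
  have t2I: "t2 \<in> I" unfolding t2_def using clI bdd dI closed_contains_Sup by blast
  have t2pos: "t2 > 0" using cSup_upper[OF dI bdd] d unfolding t2_def by simp
  define w2 where "w2 = w + t2 *\<^sub>R u"
  have o2: "ok w2" using t2I unfolding I_def w2_def by simp
  show ?thesis
  proof (cases "\<exists>j. w2$j = 0")
    case True thus ?thesis using t2pos o2 unfolding w2_def by blast
  next
    case False
    hence p2: "pos w2" using o2 unfolding ok_def pos_def by (metis less_eq_real_def)
    have tsub: "tight w \<subseteq> tight w2"
      using u unfolding tight_def w2_def by (auto simp: inner_add_left inner_diff_right)
    have Dsub: "D w \<subseteq> D w2" unfolding D_def using tsub by auto
    have "\<exists>s\<in>tight w2. s - t0 \<notin> span (D w)"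
    proof (rule ccontr)
      assume "\<not> ?thesis"
      hence "\<forall>s\<in>tight w2. u \<bullet> (s - t0) = 0" using orth_span_D[OF u] by blast
      then obtain d' where d': "d' > 0" "ok (w2 + d' *\<^sub>R u)" using small_step[OF p2 o2] by blast
      have "t2 + d' \<in> I" unfolding I_def using d' t2pos
        by (simp add: w2_def scaleR_add_left add.assoc)
      hence "t2 + d' \<le> t2" using cSup_upper[OF _ bdd] unfolding t2_def by blast
      thus False using d' by simp
    qed
    then obtain s where s: "s \<in> tight w2" "s - t0 \<notin> span (D w)" by blast
    have "span (D w) \<subset> span (D w2)"
    proof
      show "span (D w) \<subseteq> span (D w2)" using Dsub by (rule span_mono)
      have "s - t0 \<in> span (D w2)" using s(1) unfolding D_def by (intro span_base) auto
      thus "span (D w) \<noteq> span (D w2)" using s(2) by blast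
    qed
    hence "dim (D w) < dim (D w2)" by (rule dim_psubset)
    thus ?thesis using t2pos o2 p2 unfolding w2_def by blast
  qed
qed

end



lemma orth_pos_zero:
  fixes x w :: "real^'n::finite"
  assumes "\<forall>j. 0 < w$j" "x \<bullet> w = 0" "\<forall>k. 0 \<le> x$k"
  shows "x = 0"
proof -
  have "(\<Sum>j\<in>UNIV. x$j * w$j) = 0" using assms(2) by (simp add: inner_vec_def)
  moreover have "\<forall>j\<in>UNIV. 0 \<le> x$j * w$j" using assms by (simp add: less_imp_le)
  ultimately have "\<forall>j\<in>UNIV. x$j * w$j = 0" by (subst (asm) sum_nonneg_eq_0_iff) auto
  thus ?thesis using assms(1) by (simp add: vec_eq_iff) (metis less_irrefl)
qed

context walk begin

lemma walk_main:
  assumes clos: "\<And>u v a b. R u \<Longrightarrow> R v \<Longrightarrow> 0 \<le> a \<Longrightarrow> 0 \<le> b \<Longrightarrow> R (a *\<^sub>R u + b *\<^sub>R v)"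
    and B1: "\<And>w. ok w \<Longrightarrow> \<exists>j. w$j = 0 \<Longrightarrow> R w"
    and B2: "\<And>w. ok w \<Longrightarrow> pos w \<Longrightarrow> CARD('n) - 1 \<le> dim (D w) \<Longrightarrow> R w"
    and o: "ok w"
  shows "R w"
proof -
  have main: "\<And>w. pos w \<Longrightarrow> ok w \<Longrightarrow> CARD('n) - dim (D w) = m \<Longrightarrow> R w" for m
  proof (induction m rule: less_induct)
    case (less m w)
    have Rw1: "R w'" if "ok w'" "(\<exists>j. w'$j = 0) \<or> (pos w' \<and> dim (D w) < dim (D w'))" for w'
    proof (cases "\<exists>j. w'$j = 0")
      case True thus ?thesis using B1 that by blast
    next
      case False
      hence "pos w'" "dim (D w) < dim (D w')" using that by auto
      moreover have "dim (D w') \<le> CARD('n)" by (rule dim_subset_UNIV_cart)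
      ultimately show ?thesis using less.IH[of "CARD('n) - dim (D w')" w'] less.prems that by auto
    qed
    show ?case
    proof (cases "CARD('n) - 1 \<le> dim (D w)")
      case True thus ?thesis using B2 less.prems by blast
    next
      case False
      have "dim (insert w (D w)) \<le> dim (D w) + 1" by (simp add: dim_insert)
      hence "dim (insert w (D w)) < DIM(real^'n)" using False by simp
      then obtain x where x: "x \<noteq> 0" "\<And>y. y \<in> span (insert w (D w)) \<Longrightarrow> orthogonal x y"
        using orthogonal_to_subspace_exists by blast
      have xw: "x \<bullet> w = 0" using x(2)[of w] by (simp add: span_base orthogonal_def)
      have xD: "\<forall>s\<in>tight w. x \<bullet> (s - t0) = 0"
        using x(2) by (auto simp: D_def orthogonal_def intro!: span_base)
      have wp: "\<forall>j. 0 < w$j" using less.prems unfolding pos_def by simp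
      obtain k1 where k1: "x$k1 < 0"
        using orth_pos_zero[OF wp xw] x(1) by (meson not_le)
      obtain k2 where k2: "(-x)$k2 < 0"
        using orth_pos_zero[OF wp, of "-x"] xw x(1) by (simp add: inner_minus_left) (meson neg_0_le_iff_le not_le)
      have xD': "\<forall>s\<in>tight w. (-x) \<bullet> (s - t0) = 0" using xD by simp
      obtain t1 where t1: "t1 > 0" "ok (w + t1 *\<^sub>R x)" "(\<exists>j. (w + t1 *\<^sub>R x)$j = 0) \<or>
            (pos (w + t1 *\<^sub>R x) \<and> dim (D w) < dim (D (w + t1 *\<^sub>R x)))"
        using endpoint[OF less.prems(1,2) xD k1] by blast
      obtain t2 where t2: "t2 > 0" "ok (w + t2 *\<^sub>R (-x))" "(\<exists>j. (w + t2 *\<^sub>R (-x))$j = 0) \<or>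
            (pos (w + t2 *\<^sub>R (-x)) \<and> dim (D w) < dim (D (w + t2 *\<^sub>R (-x))))"
        using endpoint[OF less.prems(1,2) xD' k2] by blast
      have R1: "R (w + t1 *\<^sub>R x)" using Rw1 t1 by blast
      have R2: "R (w + t2 *\<^sub>R (-x))" using Rw1 t2 by blast
      have eq: "w = (t2/(t1+t2)) *\<^sub>R (w + t1 *\<^sub>R x) + (t1/(t1+t2)) *\<^sub>R (w + t2 *\<^sub>R (-x))"
      proof (subst vec_eq_iff, intro allI)
        fix i
        have h: "t2*(w$i + t1*x$i) + t1*(w$i - t2*x$i) = (t1+t2)*w$i" by (simp add: algebra_simps)
        have "(t2/(t1+t2))*(w$i + t1*x$i) + (t1/(t1+t2))*(w$i - t2*x$i)
            = (t2*(w$i + t1*x$i) + t1*(w$i - t2*x$i))/(t1+t2)" by (simp add: add_divide_distrib)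
        thus "w$i = ((t2/(t1+t2)) *\<^sub>R (w + t1 *\<^sub>R x) + (t1/(t1+t2)) *\<^sub>R (w + t2 *\<^sub>R (-x)))$i"
          using h t1(1) t2(1) by simp
      qed
      show ?thesis by (subst eq, rule clos[OF R1 R2]) (use t1(1) t2(1) in auto)
    qed
  qed
  show ?thesis
  proof (cases "\<exists>j. w$j = 0")
    case True thus ?thesis using B1 o by blast
  next
    case False
    hence "pos w" using o unfolding ok_def pos_def by (metis less_eq_real_def)
    thus ?thesis using main o by blast
  qed
qed

end



definition Ex :: "('n::finite) mixed \<Rightarrow> (real^'n) set" where
  "Ex c = {exp_point nu mu | nu mu. (nu, mu) \<in> mixed_support c}"

definition vecw :: "('n::finite \<Rightarrow> nat) \<Rightarrow> real^'n" where
  "vecw P = (\<chi> j. real (P j))"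

lemma wdot_eq: "wdot P x = vecw P \<bullet> x"
  by (simp add: wdot_def vecw_def inner_vec_def)

lemma exp_point_nth [simp]: "exp_point nu mu $ j = real (nu j + mu j)"
  by (simp add: exp_point_def)

lemma natEx: "\<forall>s\<in>Ex c. \<forall>j. \<exists>k::nat. s$j = real k"
  unfolding Ex_def by (auto intro!: exI[of _ "_ + _"])

lemma Ex_sub: "Ex c \<subseteq> newton_polyhedron c"
  unfolding Ex_def newton_polyhedron_def mixed_support_def
  by (auto intro!: hull_inc)

lemma LB:
  assumes w: "\<forall>j. 0 \<le> w$j" and m: "\<forall>s\<in>Ex c. m \<le> w \<bullet> s" and z: "z \<in> newton_polyhedron c"
  shows "m \<le> w \<bullet> z"
proof -
  have "newton_polyhedron c \<subseteq> {x. m \<le> inner w x}"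
    unfolding newton_polyhedron_def
  proof (rule hull_minimal)
    show "convex {x. m \<le> inner w x}" using convex_halfspace_ge[of m w] by simp
    show "(\<Union>(nu, mu)\<in>mixed_support c. {x. \<forall>j. exp_point nu mu $ j \<le> x $ j}) \<subseteq> {x. m \<le> w \<bullet> x}"
    proof clarify
      fix nu mu x assume nm: "(nu, mu) \<in> mixed_support c" and x: "\<forall>j. exp_point nu mu $ j \<le> x $ j"
      have "exp_point nu mu \<in> Ex c" using nm unfolding Ex_def by blast
      hence "m \<le> w \<bullet> exp_point nu mu" using m by blast
      also have "\<dots> \<le> w \<bullet> x" unfolding inner_vec_def inner_real_def
        by (rule sum_mono) (use w x in \<open>auto intro: mult_left_mono\<close>)
      finally show "m \<le> w \<bullet> x" .
    qed
  qed
  thus ?thesis using z by auto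
qed

lemma vecw_nonneg: "\<forall>j. 0 \<le> vecw P $ j" by (simp add: vecw_def)

lemma inner_nonneg_Ex: "\<forall>j. 0 \<le> w$j \<Longrightarrow> s \<in> Ex c \<Longrightarrow> 0 \<le> w \<bullet> s"
  unfolding inner_vec_def inner_real_def Ex_def by (auto intro!: sum_nonneg)

lemma dP_lower:
  assumes "x \<in> newton_polyhedron c" shows "dP P c \<le> vecw P \<bullet> x"
proof -
  have "bdd_below (wdot P ` newton_polyhedron c)"
  proof (rule bdd_belowI[of _ 0])
    fix x assume "x \<in> wdot P ` newton_polyhedron c"
    then obtain z where z: "z \<in> newton_polyhedron c" "x = wdot P z" by blast
    have "\<forall>s\<in>Ex c. 0 \<le> vecw P \<bullet> s" using inner_nonneg_Ex[OF vecw_nonneg] by blast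
    from LB[OF vecw_nonneg this z(1)] show "0 \<le> x" using z(2) by (simp add: wdot_eq)
  qed
  thus ?thesis unfolding dP_def using assms by (metis cInf_lower image_eqI wdot_eq)
qed

lemma Delta_min:
  assumes t: "t \<in> Ex c" and min: "\<forall>s\<in>Ex c. vecw P \<bullet> t \<le> vecw P \<bullet> s"
  shows "dP P c = vecw P \<bullet> t" "t \<in> DeltaP P c"
proof -
  have tG: "t \<in> newton_polyhedron c" using t Ex_sub by blast
  show d: "dP P c = vecw P \<bullet> t" unfolding dP_def
  proof (rule cInf_eq_minimum)
    show "vecw P \<bullet> t \<in> wdot P ` newton_polyhedron c" using tG by (auto simp: wdot_eq)
    fix x assume "x \<in> wdot P ` newton_polyhedron c"
    then obtain z where "z \<in> newton_polyhedron c" "x = wdot P z" by blast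
    thus "vecw P \<bullet> t \<le> x" using LB[OF vecw_nonneg min] by (simp add: wdot_eq)
  qed
  show "t \<in> DeltaP P c" unfolding DeltaP_def using tG d by (simp add: wdot_eq)
qed

lemma zero_lemma:
  assumes conv: "convenient c" and w: "\<forall>j. 0 \<le> w$j" and k: "w$k = 0"
    and t: "t \<in> Ex c" and min: "\<forall>s\<in>Ex c. w \<bullet> t \<le> w \<bullet> s" and j: "0 < w$j"
  shows "t$j = 0"
proof -
  obtain y where y: "y \<in> newton_boundary c" "\<forall>i. i \<noteq> k \<longrightarrow> y$i = 0"
    using conv unfolding convenient_def by blast
  have yG: "y \<in> newton_polyhedron c" using y(1) unfolding newton_boundary_def
    using face_of_imp_subset by blast
  have "w \<bullet> y = 0" unfolding inner_vec_def inner_real_def using y(2) k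
    by (intro sum.neutral) auto
  hence "w \<bullet> t \<le> 0" using LB[OF w min yG] by simp
  hence "(\<Sum>i\<in>UNIV. w$i * t$i) \<le> 0" by (simp add: inner_vec_def)
  moreover have tn: "\<forall>i. 0 \<le> t$i" using t unfolding Ex_def by auto
  ultimately have "(\<Sum>i\<in>UNIV. w$i * t$i) = 0"
    using w by (metis (no_types, lifting) antisym mult_nonneg_nonneg sum_nonneg)
  hence "\<forall>i\<in>UNIV. w$i * t$i = 0" using w tn by (subst (asm) sum_nonneg_eq_0_iff) auto
  thus ?thesis using j by (metis UNIV_I less_irrefl mult_eq_0_iff)
qed




locale walkc = walk "Ex c" T t0 for c :: "('n::finite) mixed" and T t0
begin

lemma ok_scale: "ok w \<Longrightarrow> 0 < a \<Longrightarrow> ok (a *\<^sub>R w)"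
  unfolding ok_def by (auto simp: mult_left_mono)

lemma tight_scale: "a \<noteq> 0 \<Longrightarrow> tight (a *\<^sub>R w) = tight w"
  unfolding tight_def by auto

lemma D_scale: "a \<noteq> 0 \<Longrightarrow> D (a *\<^sub>R w) = D w"
  unfolding D_def using tight_scale by simp

lemma facet_conv:
  assumes o: "ok w" and p: "pos w" and dm: "CARD('n) - 1 \<le> dim (D w)"
  shows "\<exists>P a. weight_vector P \<and> 0 < a \<and> w = a *\<^sub>R vecw P
           \<and> aff_dim (DeltaP P c) = int CARD('n) - 1 \<and> T \<subseteq> DeltaP P c"
proof -
  have w0: "w \<noteq> 0" using p unfolding pos_def by (metis less_irrefl zero_index)
  have wD: "\<forall>s\<in>tight w. w \<bullet> (s - t0) = 0" unfolding tight_def by (simp add: inner_diff_right)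
  have intD: "\<forall>b\<in>D w. \<forall>j. b$j \<in> \<int>"
  proof (intro ballI allI)
    fix b j assume "b \<in> D w"
    then obtain s where s: "s \<in> Ex c" "b = s - t0" unfolding D_def tight_def by auto
    obtain k1 k2 :: nat where "s$j = real k1" "t0$j = real k2" using natE s(1) t0E by metis
    thus "b$j \<in> \<int>" using s(2) by simp
  qed
  have "span (D w) \<noteq> UNIV"
  proof
    assume "span (D w) = UNIV"
    hence "w \<bullet> w = 0" using orth_span_D[OF wD, of w] by simp
    thus False using w0 by simp
  qed
  hence "dim (D w) \<noteq> CARD('n)" using dim_eq_full[of "D w"] by simp
  moreover have "dim (D w) \<le> CARD('n)" by (rule dim_subset_UNIV_cart)
  ultimately have dimD: "dim (D w) = CARD('n) - 1" using dm by linarith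
  obtain N where N: "N \<noteq> 0" "\<forall>j. N$j \<in> \<int>" "\<forall>b\<in>D w. N \<bullet> b = 0"
    using cofactor_normal[OF intD dimD] by blast
  have ND: "\<forall>s\<in>tight w. N \<bullet> (s - t0) = 0" using N(3) unfolding D_def by auto
  have Nsp: "N \<notin> span (D w)"
  proof
    assume "N \<in> span (D w)"
    hence "N \<bullet> N = 0" using orth_span_D[OF ND] by blast
    thus False using N(1) by simp
  qed
  have "dim (insert N (D w)) = CARD('n)" using Nsp dimD by (simp add: dim_insert)
  hence spU: "span (insert N (D w)) = UNIV" using dim_eq_full[of "insert N (D w)"] by simp
  define a0 where "a0 = (w \<bullet> N) / (N \<bullet> N)"
  define x where "x = w - a0 *\<^sub>R N"
  have xN: "x \<bullet> N = 0" unfolding x_def a0_def using N(1) by (simp add: inner_diff_left)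
  have xD: "\<forall>s\<in>tight w. x \<bullet> (s - t0) = 0"
    unfolding x_def using wD ND by (simp add: inner_diff_left)
  have "x \<bullet> y = 0" if "y \<in> span (insert N (D w))" for y
  proof -
    have "orthogonal x y"
      by (rule orthogonal_to_span[OF that])
         (use xN orth_span_D[OF xD] in \<open>auto simp: orthogonal_def inner_commute intro: span_base\<close>)
    thus ?thesis by (simp add: orthogonal_def)
  qed
  hence "x \<bullet> x = 0" using spU by blast
  hence weq: "w = a0 *\<^sub>R N" unfolding x_def by simp
  have a00: "a0 \<noteq> 0" using weq w0 by auto
  define M where "M = sgn a0 *\<^sub>R N"
  have weq2: "w = \<bar>a0\<bar> *\<^sub>R M" unfolding M_def using weq
    by (cases "a0 > 0") (auto simp: a00 sgn_if)
  have Mpos: "0 < M$j" for j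
  proof -
    have "0 < w$j" using p unfolding pos_def by blast
    moreover have "w$j = \<bar>a0\<bar> * M$j" using weq2 by simp
    ultimately have "0 < \<bar>a0\<bar> * M$j" by simp
    thus ?thesis using a00 by (simp add: zero_less_mult_iff)
  qed
  have Mint: "M$j \<in> \<int>" for j unfolding M_def using N(2) a00
    by (cases "a0 > 0") (auto simp: Ints_minus)
  define P where "P = (\<lambda>j. nat \<lfloor>M$j\<rfloor>)"
  have vP: "vecw P = M"
  proof (subst vec_eq_iff, intro allI)
    fix j
    obtain z where z: "M$j = of_int z" using Mint[of j] Ints_cases by blast
    show "vecw P $ j = M $ j" unfolding vecw_def P_def using z Mpos[of j] by simp
  qed
  have wvP: "weight_vector P" unfolding weight_vector_def P_def
  proof
    fix j
    obtain z where z: "M$j = of_int z" using Mint[of j] Ints_cases by blast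
    show "0 < nat \<lfloor>M$j\<rfloor>" using z Mpos[of j] by simp
  qed
  have aa: "0 < \<bar>a0\<bar>" using a00 by simp
  have oP: "ok (vecw P)" using ok_scale[OF o, of "1/\<bar>a0\<bar>"] weq2 aa vP by simp
  have minP: "\<forall>s\<in>Ex c. vecw P \<bullet> t \<le> vecw P \<bullet> s" if "t \<in> T" for t
    using oP that unfolding ok_def by blast
  have TD: "T \<subseteq> DeltaP P c" using Delta_min(2)[OF _ minP] TE by blast
  have dPt0: "dP P c = vecw P \<bullet> t0" using Delta_min(1)[OF t0E minP[OF t0T]] .
  have tD: "tight (vecw P) \<subseteq> DeltaP P c"
  proof
    fix s assume "s \<in> tight (vecw P)"
    hence s: "s \<in> Ex c" "vecw P \<bullet> s = vecw P \<bullet> t0" unfolding tight_def by auto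
    thus "s \<in> DeltaP P c" unfolding DeltaP_def using Ex_sub dPt0 by (auto simp: wdot_eq)
  qed
  have t0t: "t0 \<in> tight (vecw P)" unfolding tight_def using t0E by simp
  have "aff_dim (tight (vecw P)) = int (dim ((\<lambda>x. x - t0) ` tight (vecw P)))"
    by (rule aff_dim_eq_dim_subtract, rule hull_inc, rule t0t)
  also have "(\<lambda>x. x - t0) ` tight (vecw P) = D w"
    using D_scale[of "\<bar>a0\<bar>" "vecw P"] weq2 vP aa unfolding D_def by simp
  finally have "aff_dim (tight (vecw P)) = int CARD('n) - 1" using dimD by simp
  hence ge: "int CARD('n) - 1 \<le> aff_dim (DeltaP P c)" using aff_dim_subset[OF tD] by simp
  have sub: "DeltaP P c \<subseteq> {x. vecw P \<bullet> x = dP P c}" unfolding DeltaP_def by (auto simp: wdot_eq)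
  have nz: "vecw P \<noteq> 0" using vP Mpos by (metis less_irrefl zero_index)
  have "aff_dim (DeltaP P c) \<le> aff_dim {x. vecw P \<bullet> x = dP P c}" by (rule aff_dim_subset[OF sub])
  moreover have "aff_dim {x. vecw P \<bullet> x = dP P c} = int DIM(real^'n) - 1" using aff_dim_hyperplane[OF nz] by simp
  ultimately have "aff_dim (DeltaP P c) \<le> int CARD('n) - 1" by simp
  hence "aff_dim (DeltaP P c) = int CARD('n) - 1" using ge by simp
  thus ?thesis using wvP aa weq2 vP TD by blast
qed

end



definition diffv :: "('n::finite) mexp \<Rightarrow> 'n mexp \<Rightarrow> real^'n" where
  "diffv nu mu = (\<chi> j. real (nu j) - real (mu j))"

lemma vecw_diffv: "vecw P \<bullet> diffv nu mu = real_of_int (\<Sum>j\<in>UNIV. int (P j) * (int (nu j) - int (mu j)))"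
  by (simp add: inner_vec_def vecw_def diffv_def)

lemma vecw_exp: "vecw P \<bullet> exp_point nu mu = real_of_int (\<Sum>j\<in>UNIV. int (Q j) * int (nu j + mu j))"
  if "Q = P"
  using that by (simp add: inner_vec_def vecw_def)

lemma supp_ff: "mixed_support (face_function P c) = {(nu, mu) \<in> mixed_support c. exp_point nu mu \<in> DeltaP P c}"
  by (auto simp: mixed_support_def face_function_def)

lemma finite_ff:
  assumes P: "weight_vector P" shows "mixed_polynomial (face_function P c)"
proof -
  define N where "N = nat \<lceil>dP P c\<rceil>"
  have "mixed_support (face_function P c) \<subseteq> {f. \<forall>j. f j \<le> N} \<times> {f. \<forall>j. f j \<le> N}"
  proof
    fix x assume x: "x \<in> mixed_support (face_function P c)"
    obtain nu mu where x2: "x = (nu, mu)" by (cases x)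
    from x x2 have "exp_point nu mu \<in> DeltaP P c" by (simp add: supp_ff)
    hence eq: "real_of_int (\<Sum>j\<in>UNIV. int (P j) * int (nu j + mu j)) = dP P c"
      unfolding DeltaP_def wdot_eq using vecw_exp[of P P] by auto
    have "nu j + mu j \<le> N" for j
    proof -
      have "int (P j) * int (nu j + mu j) \<le> (\<Sum>j\<in>UNIV. int (P j) * int (nu j + mu j))"
        by (rule member_le_sum) auto
      moreover have "int (nu j + mu j) \<le> int (P j) * int (nu j + mu j)"
      proof -
        have "1 \<le> int (P j)" using P unfolding weight_vector_def by (simp add: Suc_le_eq)
        from mult_right_mono[OF this, of "int (nu j + mu j)"] show ?thesis by simp
      qed
      ultimately have "real (nu j + mu j) \<le> dP P c" using eq by linarith
      thus ?thesis unfolding N_def by linarith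
    qed
    hence "(\<forall>j. nu j \<le> N) \<and> (\<forall>j. mu j \<le> N)" by (metis add_leD1 add_leD2)
    thus "x \<in> {f. \<forall>j. f j \<le> N} \<times> {f. \<forall>j. f j \<le> N}" using x2 by simp
  qed
  thus ?thesis unfolding mixed_polynomial_def
    by (rule finite_subset) (intro finite_cartesian_product bounded_nat_funs_finite)
qed




lemma per_P:
  fixes c :: "('n::finite) mixed"
  assumes vanish: "c (\<lambda>_. 0) (\<lambda>_. 0) = 0" and conv: "convenient c" and P: "weight_vector P"
  shows "(polar_positive_wh_face_type c \<longrightarrow> polar_weighted_homogeneous (face_function P c))
       \<and> (strongly_polar_positive_wh_face_type c \<longrightarrow> strongly_polar_positive_wh (face_function P c) P)"
proof (cases "mixed_support (face_function P c) = {}")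
  case True
  have "polar_wh_with (face_function P c) P P 1 1"
    unfolding polar_wh_with_def using True P by (simp add: mixed_polynomial_def)
  moreover have "(0::int) < 1" by simp
  ultimately show ?thesis unfolding polar_weighted_homogeneous_def strongly_polar_positive_wh_def by blast
next
  case False
  then obtain nu0 mu0 where nm0: "(nu0, mu0) \<in> mixed_support (face_function P c)" by auto
  define T where "T = {x \<in> Ex c. x \<in> DeltaP P c}"
  define t0 where "t0 = exp_point nu0 mu0"
  have s0: "(nu0, mu0) \<in> mixed_support c" "t0 \<in> DeltaP P c" using nm0 by (auto simp: supp_ff t0_def)
  have t0T: "t0 \<in> T" unfolding T_def Ex_def using s0 t0_def by auto
  interpret W: walkc c T t0
    by unfold_locales (use natEx t0T in \<open>auto simp: T_def\<close>)
  have TD: "\<forall>t\<in>T. vecw P \<bullet> t = dP P c" unfolding T_def DeltaP_def by (auto simp: wdot_eq)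
  have okP: "W.ok (vecw P)" unfolding W.ok_def
  proof (intro conjI ballI allI)
    fix j show "0 \<le> vecw P $ j" by (simp add: vecw_def)
  next
    fix s t assume "s \<in> Ex c" "t \<in> T"
    thus "vecw P \<bullet> t \<le> vecw P \<bullet> s" using TD dP_lower[of s c P] Ex_sub by auto
  qed
  have t0nz: "\<not> (\<forall>j. t0$j = 0)"
  proof
    assume "\<forall>j. t0$j = 0"
    hence "\<forall>j. nu0 j + mu0 j = 0" unfolding t0_def by (metis exp_point_nth of_nat_eq_0_iff)
    hence "nu0 = (\<lambda>_. 0)" "mu0 = (\<lambda>_. 0)" by auto
    thus False using s0(1) vanish unfolding mixed_support_def by auto
  qed
  have noallzero: "\<not> (\<forall>j. 0 < vecw P $ j \<longrightarrow> (\<forall>t\<in>T. t$j = 0))"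
    using t0nz t0T P unfolding weight_vector_def vecw_def by auto
  have ffT: "(nu, mu) \<in> mixed_support (face_function P c) \<longleftrightarrow>
      (nu, mu) \<in> mixed_support c \<and> exp_point nu mu \<in> T" for nu mu
    unfolding supp_ff T_def Ex_def by auto
  have minT: "\<forall>s\<in>Ex c. w \<bullet> t \<le> w \<bullet> s" if "W.ok w" "t \<in> T" for w t
    using that unfolding W.ok_def by blast
  have TE: "T \<subseteq> Ex c" unfolding T_def by auto
  show ?thesis
  proof (intro conjI impI)
    assume H1: "polar_positive_wh_face_type c"
    define R where "R w = ((\<exists>P1. weight_vector P1 \<and> aff_dim (DeltaP P1 c) = int CARD('n) - 1
        \<and> T \<subseteq> DeltaP P1 c) \<or> (\<forall>j. 0 < w$j \<longrightarrow> (\<forall>t\<in>T. t$j = 0)))" for w :: "real^'n"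
    have "R (vecw P)"
    proof (rule W.walk_main[of R, OF _ _ _ okP])
      fix u v :: "real^'n" and a b :: real assume Ru: "R u" and Rv: "R v" and a: "0 \<le> a" and b: "0 \<le> b"
      show "R (a *\<^sub>R u + b *\<^sub>R v)"
      proof (cases "\<exists>P1. weight_vector P1 \<and> aff_dim (DeltaP P1 c) = int CARD('n) - 1 \<and> T \<subseteq> DeltaP P1 c")
        case True thus ?thesis unfolding R_def by blast
      next
        case False
        hence u2: "\<forall>j. 0 < u$j \<longrightarrow> (\<forall>t\<in>T. t$j = 0)" and v2: "\<forall>j. 0 < v$j \<longrightarrow> (\<forall>t\<in>T. t$j = 0)"
          using Ru Rv unfolding R_def by blast+
        have "\<forall>t\<in>T. t$j = 0" if j: "0 < (a *\<^sub>R u + b *\<^sub>R v)$j" for j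
        proof -
          have "0 < u$j \<or> 0 < v$j"
          proof (rule ccontr)
            assume "\<not> ?thesis"
            hence "a * u$j \<le> 0" "b * v$j \<le> 0" using a b by (auto simp: mult_nonneg_nonpos)
            thus False using j by simp
          qed
          thus ?thesis using u2 v2 by blast
        qed
        thus ?thesis unfolding R_def by blast
      qed
    next
      fix w assume o: "W.ok w" and z: "\<exists>j. w$j = 0"
      then obtain k where k: "w$k = 0" by blast
      have wn: "\<forall>j. 0 \<le> w$j" using o unfolding W.ok_def by blast
      have "\<forall>j. 0 < w$j \<longrightarrow> (\<forall>t\<in>T. t$j = 0)"
        using zero_lemma[OF conv wn k] minT[OF o] TE by blast
      thus "R w" unfolding R_def by blast
    next
      fix w assume "W.ok w" "W.pos w" "CARD('n) - 1 \<le> dim (W.D w)"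
      from W.facet_conv[OF this] show "R w" unfolding R_def by blast
    qed
    then obtain P1 where P1: "weight_vector P1" "aff_dim (DeltaP P1 c) = int CARD('n) - 1" "T \<subseteq> DeltaP P1 c"
      using noallzero unfolding R_def by blast
    from H1 P1(1,2) obtain Q P' mr mp where "mp > 0" and pw: "polar_wh_with (face_function P1 c) Q P' mr mp"
      unfolding polar_positive_wh_face_type_def by blast
    have sub: "mixed_support (face_function P c) \<subseteq> mixed_support (face_function P1 c)"
    proof
      fix x assume x: "x \<in> mixed_support (face_function P c)"
      obtain nu mu where x2: "x = (nu, mu)" by (cases x)
      have "(nu, mu) \<in> mixed_support c" "exp_point nu mu \<in> T" using x x2 ffT by auto
      thus "x \<in> mixed_support (face_function P1 c)" using P1(3) x2 by (auto simp: supp_ff)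
    qed
    have "polar_wh_with (face_function P c) Q P' mr mp"
      using pw sub finite_ff[OF P] unfolding polar_wh_with_def by (meson subsetD)
    thus "polar_weighted_homogeneous (face_function P c)" unfolding polar_weighted_homogeneous_def by blast
  next
    assume H2: "strongly_polar_positive_wh_face_type c"
    define R where "R w = (\<exists>m\<ge>0. (\<forall>nu mu. (nu, mu) \<in> mixed_support c \<longrightarrow> exp_point nu mu \<in> T
        \<longrightarrow> w \<bullet> diffv nu mu = m) \<and> (m = 0 \<longrightarrow> (\<forall>j. 0 < w$j \<longrightarrow> (\<forall>t\<in>T. t$j = 0))))" for w :: "real^'n"
    have "R (vecw P)"
    proof (rule W.walk_main[of R, OF _ _ _ okP])
      fix u v :: "real^'n" and a b :: real assume Ru: "R u" and Rv: "R v" and a: "0 \<le> a" and b: "0 \<le> b"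
      obtain m1 where m1: "m1 \<ge> 0" "\<forall>nu mu. (nu, mu) \<in> mixed_support c \<longrightarrow> exp_point nu mu \<in> T
        \<longrightarrow> u \<bullet> diffv nu mu = m1" "m1 = 0 \<longrightarrow> (\<forall>j. 0 < u$j \<longrightarrow> (\<forall>t\<in>T. t$j = 0))"
        using Ru unfolding R_def by blast
      obtain m2 where m2: "m2 \<ge> 0" "\<forall>nu mu. (nu, mu) \<in> mixed_support c \<longrightarrow> exp_point nu mu \<in> T
        \<longrightarrow> v \<bullet> diffv nu mu = m2" "m2 = 0 \<longrightarrow> (\<forall>j. 0 < v$j \<longrightarrow> (\<forall>t\<in>T. t$j = 0))"
        using Rv unfolding R_def by blast
      have c1: "\<forall>nu mu. (nu, mu) \<in> mixed_support c \<longrightarrow> exp_point nu mu \<in> T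
        \<longrightarrow> (a *\<^sub>R u + b *\<^sub>R v) \<bullet> diffv nu mu = a * m1 + b * m2"
        using m1(2) m2(2) by (simp add: inner_add_left)
      have c2: "\<forall>t\<in>T. t$j = 0" if m0: "a * m1 + b * m2 = 0" and j: "0 < (a *\<^sub>R u + b *\<^sub>R v)$j" for j
      proof -
        have am: "a * m1 = 0" "b * m2 = 0" using m0 a b m1(1) m2(1)
          by (smt (verit) mult_nonneg_nonneg)+
        have "0 < a * u$j \<or> 0 < b * v$j" using j by (simp, linarith)
        thus ?thesis
        proof
          assume "0 < a * u$j"
          hence "0 < a" "0 < u$j" using a by (auto simp: zero_less_mult_iff)
          thus ?thesis using am m1(3) by simp
        next
          assume "0 < b * v$j"
          hence "0 < b" "0 < v$j" using b by (auto simp: zero_less_mult_iff)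
          thus ?thesis using am m2(3) by simp
        qed
      qed
      have nn: "0 \<le> a * m1 + b * m2" using a b m1(1) m2(1) by simp
      show "R (a *\<^sub>R u + b *\<^sub>R v)" unfolding R_def
        by (rule exI[of _ "a * m1 + b * m2"], intro conjI nn c1 impI allI c2) assumption+
    next
      fix w assume o: "W.ok w" and z: "\<exists>j. w$j = 0"
      then obtain k where k: "w$k = 0" by blast
      have wn: "\<forall>j. 0 \<le> w$j" using o unfolding W.ok_def by blast
      have zz: "\<forall>j. 0 < w$j \<longrightarrow> (\<forall>t\<in>T. t$j = 0)"
        using zero_lemma[OF conv wn k] minT[OF o] TE by blast
      have "w \<bullet> diffv nu mu = 0" if "exp_point nu mu \<in> T" for nu mu
        unfolding inner_vec_def inner_real_def
      proof (rule sum.neutral, rule ballI)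
        fix j
        show "w$j * diffv nu mu $ j = 0"
        proof (cases "w$j = 0")
          case False
          hence "0 < w$j" using wn by (metis less_eq_real_def)
          hence "exp_point nu mu $ j = 0" using zz that by blast
          thus ?thesis by (simp add: diffv_def)
        qed simp
      qed
      thus "R w" unfolding R_def using zz by (intro exI[of _ 0]) auto
    next
      fix w assume "W.ok w" "W.pos w" "CARD('n) - 1 \<le> dim (W.D w)"
      from W.facet_conv[OF this] obtain P1 a where P1: "weight_vector P1" "0 < a" "w = a *\<^sub>R vecw P1"
        "aff_dim (DeltaP P1 c) = int CARD('n) - 1" "T \<subseteq> DeltaP P1 c" by blast
      from H2 P1(1,4) obtain mr mp where mp: "mp > 0" "polar_wh_with (face_function P1 c) P1 P1 mr mp"
        unfolding strongly_polar_positive_wh_face_type_def strongly_polar_positive_wh_def by blast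
      have "w \<bullet> diffv nu mu = a * real_of_int mp"
        if "(nu, mu) \<in> mixed_support c" "exp_point nu mu \<in> T" for nu mu
      proof -
        have "(nu, mu) \<in> mixed_support (face_function P1 c)" using that P1(5) by (auto simp: supp_ff)
        hence "(\<Sum>j\<in>UNIV. int (P1 j) * (int (nu j) - int (mu j))) = mp"
          using mp(2) unfolding polar_wh_with_def by blast
        thus ?thesis using P1(3) vecw_diffv[of P1 nu mu] by simp
      qed
      thus "R w" unfolding R_def using mp(1) P1(2)
        by (intro exI[of _ "a * real_of_int mp"]) auto
    qed
    then obtain m where m: "m \<ge> 0" "\<forall>nu mu. (nu, mu) \<in> mixed_support c \<longrightarrow> exp_point nu mu \<in> T
        \<longrightarrow> vecw P \<bullet> diffv nu mu = m" "m = 0 \<longrightarrow> (\<forall>j. 0 < vecw P $ j \<longrightarrow> (\<forall>t\<in>T. t$j = 0))"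
      unfolding R_def by blast
    have mpos: "m > 0" using m(1,3) noallzero by force
    define mp0 where "mp0 = (\<Sum>j\<in>UNIV. int (P j) * (int (nu0 j) - int (mu0 j)))"
    define mr0 where "mr0 = (\<Sum>j\<in>UNIV. int (P j) * int (nu0 j + mu0 j))"
    have mp0m: "real_of_int mp0 = m" using m(2) s0(1) t0T vecw_diffv[of P nu0 mu0]
      unfolding mp0_def t0_def by simp
    hence mp0pos: "mp0 > 0" using mpos by simp
    obtain j0 where j0: "t0$j0 \<noteq> 0" using t0nz by blast
    have "0 < int (P j0) * int (nu0 j0 + mu0 j0)" using j0 P unfolding t0_def weight_vector_def by simp
    also have "\<dots> \<le> mr0" unfolding mr0_def by (rule member_le_sum) auto
    finally have mr0pos: "mr0 \<noteq> 0" by simp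
    have mr0d: "real_of_int mr0 = dP P c"
      using TD t0T vecw_exp[of P P nu0 mu0] unfolding mr0_def t0_def by simp
    have "polar_wh_with (face_function P c) P P mr0 mp0"
      unfolding polar_wh_with_def
    proof (intro conjI ballI)
      show "mixed_polynomial (face_function P c)" by (rule finite_ff[OF P])
      show "weight_vector P" "weight_vector P" by (rule P)+
      show "mr0 \<noteq> 0" "mp0 \<noteq> 0" using mr0pos mp0pos by auto
    next
      fix x assume x: "x \<in> mixed_support (face_function P c)"
      obtain nu mu where x2: "x = (nu, mu)" by (cases x)
      have nm: "(nu, mu) \<in> mixed_support c" "exp_point nu mu \<in> T" using x x2 ffT by auto
      have "real_of_int (\<Sum>j\<in>UNIV. int (P j) * int (nu j + mu j)) = real_of_int mr0"
        using TD nm(2) vecw_exp[of P P nu mu] mr0d by simp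
      moreover have "real_of_int (\<Sum>j\<in>UNIV. int (P j) * (int (nu j) - int (mu j))) = real_of_int mp0"
        using m(2) nm vecw_diffv[of P nu mu] mp0m by simp
      ultimately show "case x of (nu, mu) \<Rightarrow> (\<Sum>j\<in>UNIV. int (P j) * int (nu j + mu j)) = mr0 \<and>
          (\<Sum>j\<in>UNIV. int (P j) * (int (nu j) - int (mu j))) = mp0"
        unfolding x2 of_int_eq_iff by simp
    qed
    thus "strongly_polar_positive_wh (face_function P c) P"
      unfolding strongly_polar_positive_wh_def using mp0pos by blast
  qed
qed



theorem proposition5:
  fixes c :: "('n::finite) mixed"
  assumes conv: "mixed_convergent c"
    and vanish: "c (\<lambda>_. 0) (\<lambda>_. 0) = 0"
    and convenient: "convenient c"
  shows "(polar_positive_wh_face_type c \<longrightarrow>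
            (\<forall>P. weight_vector P \<longrightarrow> polar_weighted_homogeneous (face_function P c)))
       \<and> (strongly_polar_positive_wh_face_type c \<longrightarrow>
            (\<forall>P. weight_vector P \<longrightarrow> strongly_polar_positive_wh (face_function P c) P))"
  using per_P[OF vanish convenient] by blast

end
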